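(* Let $\mathbb{F}_2$ be the free group on $T_1,T_2$, let $X=\{-1,1\}^{\mathbb{F}_2}$ with the product of the uniform measures on $\{-1,1\}$, and let $\mathbb{F}_2$ act by the shift $(gx)^h=x^{hg}$. For $x\in X$ define its two potential targets $t(x)=\{T_1x,T_2x\}$ if $x^e=1$ and $t(x)=\{T_1^{-1}x,T_2^{-1}x\}$ if $x^e=-1$. Colour $X$ with the four colours $(i,p)$, $i\in\{1,2\}$ (active part), $p\in\{u,c\}$ (passive part). For a colouring, the arrow of $x$ points to $T_i^{x^e}x$, where $i$ is the active part of the colour of $x$. The colouring rule requires at each $x$: (1) if one point of $t(x)$ has passive colour $c$ and the other has passive colour $u$, then the arrow of $x$ points to the one with passive colour $u$ (otherwise either direction is allowed); (2) the passive colour of $x$ is $c$ if the arrows of at least two points point to $x$, and is $u$ otherwise. Then this colouring rule is paradoxical.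
   Context: Here $e$ is the identity of $\mathbb{F}_2$ and $x^e$ the $e$-coordinate of $x$. A colouring satisfies the rule if it holds at almost every $x$. The rule is paradoxical if (a) some colouring (not necessarily measurable) satisfies it, and (b) there is no pair $(\mu,c)$ where $\mu$ is a finitely additive $\mathbb{F}_2$-invariant probability measure on an $\mathbb{F}_2$-invariant algebra $\mathcal{B}$ containing all measurable sets of the (completed) product measure and extending it, and $c$ is a colouring satisfying the rule all of whose colour classes lie in $\mathcal{B}$. *)

theory Defs
  imports "HOL-Probability.Probability"
begin

datatype gen = T1 | T2

(* a letter (a, True) is the generator a, (a, False) its inverse *)
type_synonym letter = "gen \<times> bool"

definition inv_letter :: "letter \<Rightarrow> letter" where
  "inv_letter l = (fst l, \<not> snd l)"

fun reduced :: "letter list \<Rightarrow> bool" where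
  "reduced [] = True"
| "reduced [l] = True"
| "reduced (l # m # w) = (m \<noteq> inv_letter l \<and> reduced (m # w))"

definition cons_red :: "letter \<Rightarrow> letter list \<Rightarrow> letter list" where
  "cons_red l w = (case w of [] \<Rightarrow> [l] | m # w' \<Rightarrow> if m = inv_letter l then w' else l # w)"

definition word_mult :: "letter list \<Rightarrow> letter list \<Rightarrow> letter list" where
  "word_mult u v = foldr cons_red u v"

typedef f2 = "{w :: letter list. reduced w}"
  morphisms rep_f2 abs_f2
  by (rule exI[of _ "[]"]) simp

definition f2_one :: f2 ("\<e>") where
  "f2_one = abs_f2 []"

definition f2_mult :: "f2 \<Rightarrow> f2 \<Rightarrow> f2" (infixl "\<cdot>" 70) where
  "g \<cdot> h = abs_f2 (word_mult (rep_f2 g) (rep_f2 h))"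

definition gen_pow :: "gen \<Rightarrow> bool \<Rightarrow> f2" where
  "gen_pow a s = abs_f2 [(a, s)]"

(* a point x : f2 => bool; x h = True encodes x^h = 1, False encodes x^h = -1 *)
type_synonym point = "f2 \<Rightarrow> bool"

definition Xmeasure :: "point measure" where
  "Xmeasure = PiM UNIV (\<lambda>_. measure_pmf (bernoulli_pmf (1/2)))"

definition shift :: "f2 \<Rightarrow> point \<Rightarrow> point" where
  "shift g x = (\<lambda>h. x (h \<cdot> g))"

datatype pcol = PU | PC

type_synonym colour = "gen \<times> pcol"   (* (active part, pcol part) *)
type_synonym colouring = "point \<Rightarrow> colour"

definition tgt :: "gen \<Rightarrow> point \<Rightarrow> point" where
  "tgt a x = shift (gen_pow a (x \<e>)) x"

definition arrow :: "colouring \<Rightarrow> point \<Rightarrow> point" where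
  "arrow c x = tgt (fst (c x)) x"

definition colouring_rule :: "colouring \<Rightarrow> point \<Rightarrow> bool" where
  "colouring_rule c x \<longleftrightarrow>
     (\<forall>a b. {a, b} = {T1, T2} \<longrightarrow>
        snd (c (tgt a x)) = PU \<longrightarrow> snd (c (tgt b x)) = PC \<longrightarrow> arrow c x = tgt a x)
   \<and> (snd (c x) = PC \<longleftrightarrow> (\<exists>y z. y \<noteq> z \<and> arrow c y = x \<and> arrow c z = x))"

definition invariant_extension :: "point set set \<Rightarrow> (point set \<Rightarrow> real) \<Rightarrow> bool" where
  "invariant_extension B \<mu> \<longleftrightarrow>
     algebra (space Xmeasure) B
   \<and> sets (completion Xmeasure) \<subseteq> B
   \<and> (\<forall>A\<in>sets (completion Xmeasure). \<mu> A = measure (completion Xmeasure) A)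
   \<and> (\<forall>g. \<forall>A\<in>B. shift g -` A \<inter> space Xmeasure \<in> B)
   \<and> (\<forall>g. \<forall>A\<in>B. \<mu> (shift g -` A \<inter> space Xmeasure) = \<mu> A)
   \<and> (\<forall>A\<in>B. 0 \<le> \<mu> A)
   \<and> \<mu> (space Xmeasure) = 1
   \<and> (\<forall>A\<in>B. \<forall>C\<in>B. A \<inter> C = {} \<longrightarrow> \<mu> (A \<union> C) = \<mu> A + \<mu> C)"

definition satisfies :: "(colouring \<Rightarrow> point \<Rightarrow> bool) \<Rightarrow> colouring \<Rightarrow> bool" where
  "satisfies R c \<longleftrightarrow> (AE x in Xmeasure. R c x)"

definition paradoxical :: "(colouring \<Rightarrow> point \<Rightarrow> bool) \<Rightarrow> bool" where
  "paradoxical R \<longleftrightarrow>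
     (\<exists>c. satisfies R c)
   \<and> \<not> (\<exists>B \<mu> c. invariant_extension B \<mu> \<and> satisfies R c
            \<and> (\<forall>k. {x \<in> space Xmeasure. c x = k} \<in> B))"

end

theory Submission
  imports Defs
begin

lemma inv_letter_inv[simp]: "inv_letter (inv_letter l) = l"
  by (simp add: inv_letter_def)

lemma reduced_tl: "reduced (l # w) \<Longrightarrow> reduced w"
  by (cases w) auto

lemma reduced_cons_red: "reduced w \<Longrightarrow> reduced (cons_red l w)"
  by (cases w) (auto simp: cons_red_def dest: reduced_tl)

lemma cons_red_cancel: "reduced w \<Longrightarrow> cons_red l (cons_red (inv_letter l) w) = w"
proof (cases w)
  case Nil thus ?thesis by (simp add: cons_red_def)
next
  case (Cons m w')
  assume r: "reduced w"
  show ?thesis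
  proof (cases "m = l")
    case True
    then show ?thesis using r Cons
      by (cases w') (auto simp: cons_red_def)
  next
    case False
    then show ?thesis using Cons by (auto simp: cons_red_def)
  qed
qed

lemma reduced_foldr: "reduced v \<Longrightarrow> reduced (foldr cons_red u v)"
  by (induct u) (auto intro: reduced_cons_red)

lemma foldr_cons_red:
  assumes "reduced z" "reduced w"
  shows "foldr cons_red (cons_red l z) w = cons_red l (foldr cons_red z w)"
proof (cases z)
  case Nil thus ?thesis by (simp add: cons_red_def)
next
  case (Cons m z')
  show ?thesis
  proof (cases "m = inv_letter l")
    case True
    have "cons_red l (foldr cons_red z w) = cons_red l (cons_red (inv_letter l) (foldr cons_red z' w))"
      using Cons True by simp
    also have "\<dots> = foldr cons_red z' w"
      by (rule cons_red_cancel[OF reduced_foldr[OF assms(2)]])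
    finally show ?thesis using Cons True by (simp add: cons_red_def)
  qed (use Cons in \<open>simp add: cons_red_def\<close>)
qed

lemma foldr_assoc:
  assumes "reduced v" "reduced w"
  shows "foldr cons_red (foldr cons_red u v) w = foldr cons_red u (foldr cons_red v w)"
  using assms
  by (induct u) (auto simp: foldr_cons_red reduced_foldr)

lemma foldr_nil: "reduced w \<Longrightarrow> foldr cons_red w [] = w"
proof (induct w)
  case Nil thus ?case by simp
next
  case (Cons l w)
  hence r: "reduced w" by (auto dest: reduced_tl)
  show ?case using Cons r by (cases w) (auto simp: cons_red_def)
qed

definition inv_word :: "letter list \<Rightarrow> letter list" where
  "inv_word w = rev (map inv_letter w)"

lemma inv_word_inv[simp]: "inv_word (inv_word w) = w"
  by (simp add: inv_word_def rev_map comp_def)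

lemma foldr_cancel: "reduced v \<Longrightarrow> foldr cons_red (u @ inv_word u) v = v"
proof (induct u arbitrary: v)
  case Nil thus ?case by (simp add: inv_word_def)
next
  case (Cons l u)
  have "foldr cons_red ((l # u) @ inv_word (l # u)) v
      = cons_red l (foldr cons_red (u @ inv_word u) (cons_red (inv_letter l) v))"
    by (simp add: inv_word_def)
  also have "\<dots> = cons_red l (cons_red (inv_letter l) v)"
    using Cons by (simp add: reduced_cons_red)
  also have "\<dots> = v" using Cons by (simp add: cons_red_cancel)
  finally show ?case .
qed

definition f2_inv :: "f2 \<Rightarrow> f2" where
  "f2_inv g = abs_f2 (foldr cons_red (inv_word (rep_f2 g)) [])"

lemma rep_red[simp]: "reduced (rep_f2 g)"
  using rep_f2 by auto

lemma rep_abs_foldr[simp]: "reduced v \<Longrightarrow> rep_f2 (abs_f2 (foldr cons_red u v)) = foldr cons_red u v"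
  by (simp add: abs_f2_inverse reduced_foldr)

lemma f2_assoc: "f2_mult (f2_mult a b) c = f2_mult a (f2_mult b c)"
  by (simp add: f2_mult_def word_mult_def foldr_assoc)

lemma f2_one_left[simp]: "f2_mult \<e> a = a"
  by (simp add: f2_mult_def word_mult_def f2_one_def abs_f2_inverse rep_f2_inverse)

lemma f2_one_right[simp]: "f2_mult a \<e> = a"
  by (simp add: f2_mult_def word_mult_def f2_one_def abs_f2_inverse rep_f2_inverse foldr_nil)

lemma f2_inv_left[simp]: "f2_mult (f2_inv a) a = \<e>"
proof -
  have "foldr cons_red (foldr cons_red (inv_word (rep_f2 a)) []) (rep_f2 a)
      = foldr cons_red (inv_word (rep_f2 a) @ inv_word (inv_word (rep_f2 a))) []"
    by (simp add: foldr_assoc foldr_nil)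
  also have "\<dots> = []" by (rule foldr_cancel) simp
  finally show ?thesis
    by (simp add: f2_mult_def word_mult_def f2_inv_def f2_one_def)
qed

lemma f2_inv_right[simp]: "f2_mult a (f2_inv a) = \<e>"
proof -
  have "foldr cons_red (rep_f2 a) (foldr cons_red (inv_word (rep_f2 a)) [])
      = foldr cons_red (rep_f2 a @ inv_word (rep_f2 a)) []"
    by (simp add: foldr_nil)
  also have "\<dots> = []" by (rule foldr_cancel) simp
  finally show ?thesis
    by (simp add: f2_mult_def word_mult_def f2_inv_def f2_one_def)
qed

lemma f2_cancel_right: "f2_mult a c = f2_mult b c \<longleftrightarrow> a = b"
  by (metis f2_assoc f2_inv_right f2_one_right)

lemma shift_shift: "shift g (shift h x) = shift (f2_mult g h) x"
  by (simp add: shift_def f2_assoc)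

lemma shift_one[simp]: "shift \<e> x = x"
  by (simp add: shift_def)

lemma gen_pow_inv: "f2_mult (gen_pow a s) (gen_pow a (\<not> s)) = \<e>"
  by (simp add: gen_pow_def f2_mult_def word_mult_def abs_f2_inverse cons_red_def inv_letter_def f2_one_def)

lemma shift_gen_cancel[simp]: "shift (gen_pow a s) (shift (gen_pow a (\<not> s)) x) = x"
  by (simp add: shift_shift gen_pow_inv)

lemma shift_gen_cancel'[simp]: "shift (gen_pow a (\<not> s)) (shift (gen_pow a s) x) = x"
  using shift_gen_cancel[of a "\<not> s" x] by simp

lemma space_X[simp]: "space Xmeasure = UNIV"
  by (auto simp: Xmeasure_def space_PiM PiE_def extensional_def)

lemma comp_meas: "(\<lambda>x. x j) \<in> Xmeasure \<rightarrow>\<^sub>M measure_pmf (bernoulli_pmf (1/2))"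
  unfolding Xmeasure_def by (rule measurable_component_singleton) simp

lemma coord_sets: "{x. x j = b} \<in> sets Xmeasure"
proof -
  have "{x. x j = b} = (\<lambda>x. x j) -` {b} \<inter> space Xmeasure" by auto
  also have "\<dots> \<in> sets Xmeasure" by (rule measurable_sets[OF comp_meas]) simp
  finally show ?thesis .
qed

lemma cyl_sets:
  assumes "finite J"
  shows "{x. \<forall>j\<in>J. x j = (j \<in> S)} \<in> sets Xmeasure"
  using assms
proof (induct J)
  case empty
  then show ?case using sets.top[of Xmeasure] by simp
next
  case (insert j J)
  have "{x. \<forall>j\<in>insert j J. x j = (j \<in> S)} = {x. x j = (j \<in> S)} \<inter> {x. \<forall>j\<in>J. x j = (j \<in> S)}"
    by auto
  then show ?case using insert coord_sets by auto
qed

lemma cyl_emeasure: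
  assumes "finite J"
  shows "emeasure Xmeasure {x. \<forall>j\<in>J. x j = (j \<in> S)} = ennreal ((1/2) ^ card J)"
proof -
  interpret P: product_prob_space "\<lambda>_. measure_pmf (bernoulli_pmf (1/2))" UNIV
    by unfold_locales (simp add: prob_space_measure_pmf)
  have e: "{x. \<forall>j\<in>J. x j = (j \<in> S)} = {x \<in> space Xmeasure. \<forall>j\<in>J. x j \<in> {j \<in> S}}"
    by simp
  have "emeasure Xmeasure {x \<in> space Xmeasure. \<forall>j\<in>J. x j \<in> {j \<in> S}} = (\<Prod>j\<in>J. emeasure (measure_pmf (bernoulli_pmf (1/2))) {j \<in> S})"
    unfolding Xmeasure_def using assms
    by (intro P.emeasure_PiM_Collect) simp_all
  also have "\<dots> = (\<Prod>j\<in>J. ennreal (1/2))"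
    by (intro prod.cong refl) (simp add: emeasure_pmf_single)
  also have "\<dots> = ennreal ((1/2) ^ card J)"
    by (subst prod_ennreal) (auto simp del: power_one_over)
  finally show ?thesis by (simp only: e)
qed

lemma cyl_measure:
  assumes "finite J"
  shows "measure Xmeasure {x. \<forall>j\<in>J. x j = (j \<in> S)} = (1/2) ^ card J"
  unfolding measure_def cyl_emeasure[OF assms, of S]
  by (rule enn2real_ennreal) simp

lemma f2_mult_abs: "reduced u \<Longrightarrow> reduced v \<Longrightarrow> f2_mult (abs_f2 u) (abs_f2 v) = abs_f2 (word_mult u v)"
  by (simp add: f2_mult_def abs_f2_inverse)

lemma gen_pow_abs: "gen_pow a s = abs_f2 [(a, s)]"
  by (simp add: gen_pow_def)

lemma abs_f2_eq: "reduced u \<Longrightarrow> reduced v \<Longrightarrow> abs_f2 u = abs_f2 v \<longleftrightarrow> u = v"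
  by (simp add: abs_f2_inject)

lemmas f2c = f2_mult_abs gen_pow_abs abs_f2_eq word_mult_def cons_red_def inv_letter_def

locale ie =
  fixes B :: "point set set" and \<mu> :: "point set \<Rightarrow> real"
  assumes ie: "invariant_extension B \<mu>"
begin

lemma alg: "algebra UNIV B" using ie by (simp add: invariant_extension_def)

lemma B_Un[intro]: "A \<in> B \<Longrightarrow> C \<in> B \<Longrightarrow> A \<union> C \<in> B"
  using ring_of_sets.Un[OF algebra.axioms(1)[OF alg]] by blast
lemma B_Int[intro]: "A \<in> B \<Longrightarrow> C \<in> B \<Longrightarrow> A \<inter> C \<in> B"
  using semiring_of_sets.Int[OF ring_of_sets.axioms(1)[OF algebra.axioms(1)[OF alg]]] by blast
lemma B_Diff[intro]: "A \<in> B \<Longrightarrow> C \<in> B \<Longrightarrow> A - C \<in> B"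
  using ring_of_sets.Diff[OF algebra.axioms(1)[OF alg]] by blast
lemma B_UNIV[intro, simp]: "UNIV \<in> B"
  using algebra.top[OF alg] by blast

lemma add: "A \<in> B \<Longrightarrow> C \<in> B \<Longrightarrow> A \<inter> C = {} \<Longrightarrow> \<mu> (A \<union> C) = \<mu> A + \<mu> C"
  using ie by (simp add: invariant_extension_def)

lemma nonneg: "A \<in> B \<Longrightarrow> 0 \<le> \<mu> A"
  using ie by (simp add: invariant_extension_def)

lemma total: "\<mu> UNIV = 1"
  using ie by (simp add: invariant_extension_def)

lemma mono: assumes "A \<in> B" "C \<in> B" "A \<subseteq> C" shows "\<mu> A \<le> \<mu> C"
proof -
  have "C = A \<union> (C - A)" using assms by auto
  hence "\<mu> C = \<mu> A + \<mu> (C - A)" using assms add[of A "C - A"] by auto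
  thus ?thesis using nonneg[of "C - A"] assms by auto
qed

lemma diff: assumes "A \<in> B" "C \<in> B" "A \<subseteq> C" shows "\<mu> (C - A) = \<mu> C - \<mu> A"
proof -
  have "C = A \<union> (C - A)" using assms by auto
  hence "\<mu> C = \<mu> A + \<mu> (C - A)" using assms add[of A "C - A"] by auto
  thus ?thesis by simp
qed

lemma modular: assumes "A \<in> B" "C \<in> B" shows "\<mu> (A \<union> C) + \<mu> (A \<inter> C) = \<mu> A + \<mu> C"
proof -
  have 1: "A \<union> C = A \<union> (C - A)" by auto
  have 2: "C = (A \<inter> C) \<union> (C - A)" by auto
  have "\<mu> (A \<union> C) = \<mu> A + \<mu> (C - A)" using 1 add[of A "C - A"] assms by auto
  moreover have "\<mu> C = \<mu> (A \<inter> C) + \<mu> (C - A)" using add[of "A \<inter> C" "C - A"] assms 2 by auto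
  ultimately show ?thesis by simp
qed

lemma sub: assumes "A \<in> B" "C \<in> B" shows "\<mu> (A \<union> C) \<le> \<mu> A + \<mu> C"
  using modular[OF assms] nonneg[OF B_Int[OF assms]] by linarith

lemma compl: "A \<in> B \<Longrightarrow> \<mu> (UNIV - A) = 1 - \<mu> A"
  using diff[of A UNIV] total by auto

lemma sets_X: "A \<in> sets Xmeasure \<Longrightarrow> A \<in> B"
  using ie unfolding invariant_extension_def by auto

lemma mu_X: "A \<in> sets Xmeasure \<Longrightarrow> \<mu> A = measure Xmeasure A"
  using ie unfolding invariant_extension_def by auto

lemma shift_B: "A \<in> B \<Longrightarrow> shift g -` A \<in> B"
  using ie unfolding invariant_extension_def by auto

lemma shift_mu: "A \<in> B \<Longrightarrow> \<mu> (shift g -` A) = \<mu> A"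
  using ie unfolding invariant_extension_def by auto

lemma null_le: assumes "A \<in> B" "N \<in> B" "\<mu> N = 0" "A \<subseteq> C \<union> N" "C \<in> B" shows "\<mu> A \<le> \<mu> C"
proof -
  have "\<mu> A \<le> \<mu> (C \<union> N)" using assms by (intro mono) auto
  also have "\<dots> \<le> \<mu> C + \<mu> N" using assms by (intro sub) auto
  finally show ?thesis using assms by simp
qed

lemma four_count:
  fixes K :: "gen \<times> bool \<Rightarrow> point set"
  assumes K: "\<And>i. K i \<in> B" and D: "D \<in> B"
    and cov: "\<And>z. z \<in> D \<Longrightarrow> \<exists>i j. i \<noteq> j \<and> z \<in> K i \<and> z \<in> K j"
  shows "2 * \<mu> D \<le> \<mu> (K (T1,True)) + \<mu> (K (T1,False)) + \<mu> (K (T2,True)) + \<mu> (K (T2,False))"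
proof -
  define K1 K2 K3 K4 where "K1 = K (T1,True)" "K2 = K (T1,False)" "K3 = K (T2,True)" "K4 = K (T2,False)"
  have Kb: "K1 \<in> B" "K2 \<in> B" "K3 \<in> B" "K4 \<in> B" using K K1_K2_K3_K4_def by auto
  define U1 U2 B1 B2 where "U1 = K1 \<union> K2" "U2 = K3 \<union> K4" "B1 = K1 \<inter> K2" "B2 = K3 \<inter> K4"
  have Ub: "U1 \<in> B" "U2 \<in> B" "B1 \<in> B" "B2 \<in> B" using Kb U1_U2_B1_B2_def by auto
  have c: "z \<in> K1 \<and> z \<in> K2 \<or> z \<in> K1 \<and> z \<in> K3 \<or> z \<in> K1 \<and> z \<in> K4 \<or> z \<in> K2 \<and> z \<in> K3 \<or> z \<in> K2 \<and> z \<in> K4 \<or> z \<in> K3 \<and> z \<in> K4"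
    if zD: "z \<in> D" for z
  proof -
    obtain i j where ij: "i \<noteq> j" "z \<in> K i" "z \<in> K j" using cov[OF zD] by blast
    obtain a b where i: "i = (a, b)" by (cases i)
    obtain a' b' where j: "j = (a', b')" by (cases j)
    show ?thesis using ij i j K1_K2_K3_K4_def by (cases a; cases b; cases a'; cases b') auto
  qed
  have s1: "D \<subseteq> U1 \<union> U2" using c U1_U2_B1_B2_def by blast
  have s2: "D \<subseteq> (U1 \<inter> U2) \<union> (B1 \<union> B2)" using c U1_U2_B1_B2_def by blast
  have e1: "\<mu> K1 + \<mu> K2 = \<mu> U1 + \<mu> B1" using modular[of K1 K2] Kb U1_U2_B1_B2_def by simp
  have e2: "\<mu> K3 + \<mu> K4 = \<mu> U2 + \<mu> B2" using modular[of K3 K4] Kb U1_U2_B1_B2_def by simp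
  have e3: "\<mu> U1 + \<mu> U2 = \<mu> (U1 \<union> U2) + \<mu> (U1 \<inter> U2)" using modular[of U1 U2] Ub by simp
  have e4: "\<mu> (B1 \<union> B2) \<le> \<mu> B1 + \<mu> B2" using sub Ub by simp
  have e5: "\<mu> ((U1 \<inter> U2) \<union> (B1 \<union> B2)) \<le> \<mu> (U1 \<inter> U2) + \<mu> (B1 \<union> B2)" using sub Ub by auto
  have e6: "\<mu> D \<le> \<mu> (U1 \<union> U2)" using s1 Ub D by (intro mono) auto
  have e7: "\<mu> D \<le> \<mu> ((U1 \<inter> U2) \<union> (B1 \<union> B2))" using s2 Ub D by (intro mono) auto
  show ?thesis using e1 e2 e3 e4 e5 e6 e7 K1_K2_K3_K4_def by simp
qed

end

lemma sg_e[simp]: "shift (gen_pow a s) x \<e> = x (gen_pow a s)"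
  by (simp add: shift_def)

lemma all_gen_bool: "(\<forall>a b. P a b) \<longleftrightarrow> P T1 True \<and> P T1 False \<and> P T2 True \<and> P T2 False"
  by (metis (full_types) gen.exhaust)

definition E0 :: "point set" where "E0 = {z. \<forall>a b. z (gen_pow a b) = b}"
definition E4 :: "point set" where "E4 = {z. \<forall>a b. z (gen_pow a b) = (\<not> b)}"
definition E7 :: "point set" where
  "E7 = {z. z \<in> E4 \<and> shift (gen_pow T2 True) (shift (gen_pow T1 False) z) \<in> E4}"

lemma E0_cyl: "E0 = {x. \<forall>j\<in>{gen_pow T1 False, gen_pow T2 False, gen_pow T1 True, gen_pow T2 True}.
     x j = (j \<in> {gen_pow T1 True, gen_pow T2 True})}"
  unfolding E0_def all_gen_bool by (simp add: f2c) blast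

lemma E0_card: "card {gen_pow T1 False, gen_pow T2 False, gen_pow T1 True, gen_pow T2 True} = 4"
  by (simp add: f2c)

definition J7 :: "f2 set" where
  "J7 = {abs_f2 [(T1,False)], abs_f2 [(T2,False)], abs_f2 [(T1,True)], abs_f2 [(T2,True)],
         abs_f2 [(T1,False),(T2,True),(T1,False)], abs_f2 [(T1,True),(T2,True),(T1,False)],
         abs_f2 [(T2,True),(T2,True),(T1,False)]}"

lemma E7_cyl: "E7 = {x. \<forall>j\<in>J7. x j = (j \<in> {abs_f2 [(T1,False)], abs_f2 [(T2,False)], abs_f2 [(T1,False),(T2,True),(T1,False)]})}"
  unfolding E7_def E4_def all_gen_bool J7_def by (simp add: f2c shift_def) blast

lemma J7_card: "card J7 = 7"
  unfolding J7_def by (simp add: f2c)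

lemma E0_sets: "E0 \<in> sets Xmeasure" unfolding E0_cyl by (rule cyl_sets) simp
lemma E7_sets: "E7 \<in> sets Xmeasure" unfolding E7_cyl by (rule cyl_sets) (simp add: J7_def)
lemma E0_meas: "measure Xmeasure E0 = 1/16"
  unfolding E0_cyl by (subst cyl_measure) (simp_all add: E0_card power_one_over)
lemma E7_meas: "measure Xmeasure E7 = 1/128"
  unfolding E7_cyl by (subst cyl_measure) (simp_all add: J7_card[unfolded J7_def] J7_def power_one_over)

lemma pcol_neq: "(p \<noteq> PC) = (p = PU)" by (cases p) auto

lemma gen_neq1: "(g \<noteq> T1) = (g = T2)" by (cases g) auto
lemma gen_neq2: "(g \<noteq> T2) = (g = T1)" by (cases g) auto

context ie begin

lemma empty_mu: "\<mu> {} = 0"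
  using add[of "{}" "{}"] algebra.axioms(1)[OF alg] by (simp add: ring_of_sets_iff)

lemma empty_B: "{} \<in> B"
  using algebra.axioms(1)[OF alg] by (simp add: ring_of_sets_iff)

lemma add4:
  fixes A :: "gen \<Rightarrow> bool \<Rightarrow> point set"
  assumes "\<And>a s. A a s \<in> B" "\<And>a s a' s'. (a, s) \<noteq> (a', s') \<Longrightarrow> A a s \<inter> A a' s' = {}"
  shows "\<mu> (A T1 True \<union> A T1 False \<union> A T2 True \<union> A T2 False)
       = \<mu> (A T1 True) + \<mu> (A T1 False) + \<mu> (A T2 True) + \<mu> (A T2 False)"
proof -
  have d: "A a s \<inter> A a' s' = {}" if "(a, s) \<noteq> (a', s')" for a s a' s' using assms(2) that by blast
  have 1: "\<mu> (A T1 True \<union> A T1 False) = \<mu> (A T1 True) + \<mu> (A T1 False)"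
    using assms(1) d[of T1 True T1 False] by (intro add) auto
  have 2: "\<mu> (A T1 True \<union> A T1 False \<union> A T2 True) = \<mu> (A T1 True \<union> A T1 False) + \<mu> (A T2 True)"
    using assms(1) d[of T1 True T2 True] d[of T1 False T2 True] by (intro add) auto
  have 3: "\<mu> (A T1 True \<union> A T1 False \<union> A T2 True \<union> A T2 False) = \<mu> (A T1 True \<union> A T1 False \<union> A T2 True) + \<mu> (A T2 False)"
    using assms(1) d[of T1 True T2 False] d[of T1 False T2 False] d[of T2 True T2 False]
    by (intro add) auto
  show ?thesis using 1 2 3 by simp
qed

lemma main_b:
  assumes sat: "satisfies colouring_rule c"
    and cls: "\<forall>k. {x \<in> space Xmeasure. c x = k} \<in> B"
  shows False
proof -
  obtain N where N: "{x \<in> space Xmeasure. \<not> colouring_rule c x} \<subseteq> N" "emeasure Xmeasure N = 0" "N \<in> sets Xmeasure"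
    using sat unfolding satisfies_def by (rule AE_E)
  have NB: "N \<in> B" using sets_X N by auto
  have muN: "\<mu> N = 0" using mu_X[OF N(3)] N(2) by (simp add: measure_def)
  have rule: "colouring_rule c x" if "x \<notin> N" for x using N(1) that by auto
  have K: "{x. c x = k} \<in> B" for k using spec[OF cls, of k] by simp
  have pc2: "snd (c x) = PU" if "snd (c x) \<noteq> PC" for x using that by (cases "snd (c x)") auto
  define C where "C = {x. snd (c x) = PC}"
  have CB: "C \<in> B"
  proof -
    have "C = {x. c x = (T1,PC)} \<union> {x. c x = (T2,PC)}" unfolding C_def
      by (auto, metis gen.exhaust prod.collapse)
    thus ?thesis by (simp only:) (intro B_Un K)
  qed
  have coordB: "{x. x j = b} \<in> B" for j b by (rule sets_X[OF coord_sets])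
  define P where "P a s = {x. fst (c x) = a \<and> x \<e> = s}" for a s
  have PB: "P a s \<in> B" for a s
  proof -
    have "P a s = ({x. c x = (a,PU)} \<union> {x. c x = (a,PC)}) \<inter> {x. x \<e> = s}" unfolding P_def
    proof (rule set_eqI)
      fix x
      obtain g p where gp: "c x = (g, p)" by (cases "c x")
      show "x \<in> {x. fst (c x) = a \<and> x \<e> = s} \<longleftrightarrow> x \<in> ({x. c x = (a,PU)} \<union> {x. c x = (a,PC)}) \<inter> {x. x \<e> = s}"
        using gp by (cases p) auto
    qed
    thus ?thesis by (simp only:) (intro B_Int B_Un K coordB)
  qed
  define I where "I a s = shift (gen_pow a (\<not> s)) -` P a s" for a s
  have IB: "I a s \<in> B" for a s unfolding I_def by (intro shift_B PB)
  have arr: "arrow c y = shift (gen_pow (fst (c y)) (y \<e>)) y" for y by (simp add: arrow_def tgt_def)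
  have backw: "shift (gen_pow (fst (c y)) (\<not> (y \<e>))) (arrow c y) = y" for y
    by (simp add: arr)
  have arrI: "arrow c y \<in> I (fst (c y)) (y \<e>)" for y
    unfolding I_def P_def by (simp add: backw del: sg_e)
  have Iarr: "arrow c (shift (gen_pow a (\<not> s)) z) = z" if "z \<in> I a s" for a s z
  proof -
    have h: "fst (c (shift (gen_pow a (\<not> s)) z)) = a" "shift (gen_pow a (\<not> s)) z \<e> = s"
      using that unfolding I_def P_def by (auto simp del: sg_e)
    show ?thesis by (simp only: arr h shift_gen_cancel)
  qed
  have Icoord: "z (gen_pow a (\<not> s)) = s" if "z \<in> I a s" for a s z
    using that unfolding I_def P_def by simp
  have ptr_idx: "(fst (c y), y \<e>) \<noteq> (fst (c y'), y' \<e>)" if "y \<noteq> y'" "arrow c y = z" "arrow c y' = z" for y y' z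
  proof
    assume eq: "(fst (c y), y \<e>) = (fst (c y'), y' \<e>)"
    have "y = shift (gen_pow (fst (c y)) (\<not> (y \<e>))) z" using backw[of y] that(2) by simp
    also have "\<dots> = shift (gen_pow (fst (c y')) (\<not> (y' \<e>))) z" using eq by simp
    also have "\<dots> = y'" using backw[of y'] that(3) by simp
    finally show False using that(1) by simp
  qed
  have R2: "snd (c x) = PC \<longleftrightarrow> (\<exists>y z. y \<noteq> z \<and> arrow c y = x \<and> arrow c z = x)" if "x \<notin> N" for x
    using rule[OF that] unfolding colouring_rule_def by blast
  have R1: "tgt T1 x \<in> C \<and> tgt T2 x \<in> C" if "x \<notin> N" "arrow c x \<in> C" for x
  proof -
    have r1: "\<And>a b. {a, b} = {T1, T2} \<Longrightarrow> snd (c (tgt a x)) = PU \<Longrightarrow> snd (c (tgt b x)) = PC \<Longrightarrow> arrow c x = tgt a x"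
      using rule[OF that(1)] unfolding colouring_rule_def by blast
    have ar: "arrow c x = tgt (fst (c x)) x" by (simp add: arrow_def)
    show ?thesis
    proof (cases "fst (c x)")
      case T1
      hence a: "tgt T1 x \<in> C" using ar that(2) by simp
      show ?thesis
      proof (rule ccontr)
        assume nt: "\<not> (tgt T1 x \<in> C \<and> tgt T2 x \<in> C)"
        hence "snd (c (tgt T2 x)) = PU" using a pc2 unfolding C_def by auto
        hence "arrow c x = tgt T2 x" using r1[of T2 T1] a unfolding C_def by auto
        thus False using nt a that(2) by simp
      qed
    next
      case T2
      hence a: "tgt T2 x \<in> C" using ar that(2) by simp
      show ?thesis
      proof (rule ccontr)
        assume nt: "\<not> (tgt T1 x \<in> C \<and> tgt T2 x \<in> C)"
        hence "snd (c (tgt T1 x)) = PU" using a pc2 unfolding C_def by auto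
        hence "arrow c x = tgt T1 x" using r1[of T1 T2] a unfolding C_def by auto
        thus False using nt a that(2) by simp
      qed
    qed
  qed
  have twoI: "\<exists>i j. i \<noteq> j \<and> z \<in> I (fst i) (snd i) \<and> z \<in> I (fst j) (snd j)" if zC: "z \<in> C" and zN: "z \<notin> N" for z
  proof -
    obtain y y' where yy: "y \<noteq> y'" "arrow c y = z" "arrow c y' = z"
      using R2[OF zN] zC unfolding C_def by auto
    show ?thesis
      using ptr_idx[OF yy] arrI[of y] arrI[of y'] yy
      by (intro exI[of _ "(fst (c y), y \<e>)"] exI[of _ "(fst (c y'), y' \<e>)"]) auto
  qed
  have ptrC: "z \<in> C" if "z \<notin> N" "z \<in> I a s" "z \<in> I a' s'" "(a,s) \<noteq> (a',s')" for z a s a' s'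
  proof -
    let ?y = "shift (gen_pow a (\<not> s)) z" and ?y' = "shift (gen_pow a' (\<not> s')) z"
    have h: "fst (c ?y) = a" "?y \<e> = s" "fst (c ?y') = a'" "?y' \<e> = s'"
      using that(2,3) unfolding I_def P_def by (auto simp del: sg_e)
    have "?y \<noteq> ?y'"
    proof
      assume eq: "?y = ?y'"
      have "a = a'" using h(1) h(3) unfolding eq by simp
      moreover have "s = s'" using h(2) h(4) unfolding eq by simp
      ultimately have "(a, s) = (a', s')" by simp
      thus False using that(4) by simp
    qed
    moreover have "arrow c ?y = z" "arrow c ?y' = z" using Iarr that by auto
    ultimately show ?thesis using R2[OF that(1)] unfolding C_def by blast
  qed
  have sumP: "\<mu> (P T1 True) + \<mu> (P T1 False) + \<mu> (P T2 True) + \<mu> (P T2 False) = 1"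
  proof -
    have "UNIV = P T1 True \<union> P T1 False \<union> P T2 True \<union> P T2 False"
      unfolding P_def by (auto simp: gen_neq1 gen_neq2)
    moreover have "\<mu> (P T1 True \<union> P T1 False \<union> P T2 True \<union> P T2 False) = \<mu> (P T1 True) + \<mu> (P T1 False) + \<mu> (P T2 True) + \<mu> (P T2 False)"
      by (rule add4[of P, OF PB]) (auto simp: P_def)
    ultimately show ?thesis using total by simp
  qed
  have muI: "\<mu> (I a s) = \<mu> (P a s)" for a s unfolding I_def by (rule shift_mu[OF PB])
  define Pc where "Pc a s = P a s \<inter> shift (gen_pow a s) -` C" for a s
  have PcB: "Pc a s \<in> B" for a s unfolding Pc_def by (intro B_Int PB shift_B CB)
  have ICeq: "I a s \<inter> C = shift (gen_pow a (\<not> s)) -` Pc a s" for a s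
    unfolding I_def Pc_def by auto
  have muIC: "\<mu> (I a s \<inter> C) = \<mu> (Pc a s)" for a s unfolding ICeq by (rule shift_mu[OF PcB])
  have splitI: "\<mu> (I a s) = \<mu> (I a s \<inter> C) + \<mu> (I a s - C)" for a s
  proof -
    have "I a s = (I a s \<inter> C) \<union> (I a s - C)" by auto
    hence "\<mu> (I a s) = \<mu> ((I a s \<inter> C) \<union> (I a s - C))" by simp
    also have "\<dots> = \<mu> (I a s \<inter> C) + \<mu> (I a s - C)" using IB CB by (intro add B_Int B_Diff) auto
    finally show ?thesis .
  qed
  define Qs where "Qs s = {y. y \<e> = s \<and> shift (gen_pow T1 s) y \<in> C \<and> shift (gen_pow T2 s) y \<in> C}" for s
  have QsB: "Qs s \<in> B" for s
  proof -
    have "Qs s = {y. y \<e> = s} \<inter> shift (gen_pow T1 s) -` C \<inter> shift (gen_pow T2 s) -` C"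
      unfolding Qs_def by auto
    thus ?thesis by (simp only:) (intro B_Int shift_B coordB CB)
  qed
  define Q where "Q = Qs True \<union> Qs False"
  have QB: "Q \<in> B" unfolding Q_def by (intro B_Un QsB)
  have muQ: "\<mu> Q = \<mu> (Qs True) + \<mu> (Qs False)"
    unfolding Q_def by (intro add QsB) (auto simp: Qs_def)
  define J where "J a s = shift (gen_pow a (\<not> s)) -` Qs s" for a s
  have JB: "J a s \<in> B" for a s unfolding J_def by (intro shift_B QsB)
  have muJ: "\<mu> (J a s) = \<mu> (Qs s)" for a s unfolding J_def by (rule shift_mu[OF QsB])
  have JC: "J a s \<subseteq> C" for a s
    unfolding J_def Qs_def by (cases a) auto
  have muJC: "\<mu> (J a s) \<le> \<mu> C" for a s by (rule mono[OF JB CB JC])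
  have sumPc: "\<mu> (Pc T1 True) + \<mu> (Pc T1 False) + \<mu> (Pc T2 True) + \<mu> (Pc T2 False) \<le> \<mu> Q"
  proof -
    have "\<mu> (Pc T1 True) + \<mu> (Pc T1 False) + \<mu> (Pc T2 True) + \<mu> (Pc T2 False)
        = \<mu> (Pc T1 True \<union> Pc T1 False \<union> Pc T2 True \<union> Pc T2 False)"
      using PcB by (intro add4[symmetric]) (auto simp: Pc_def P_def)
    also have "\<dots> \<le> \<mu> Q"
    proof (rule null_le[OF _ NB muN _ QB])
      show "Pc T1 True \<union> Pc T1 False \<union> Pc T2 True \<union> Pc T2 False \<in> B" by (intro B_Un PcB)
      show "Pc T1 True \<union> Pc T1 False \<union> Pc T2 True \<union> Pc T2 False \<subseteq> Q \<union> N"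
      proof
        fix y assume y: "y \<in> Pc T1 True \<union> Pc T1 False \<union> Pc T2 True \<union> Pc T2 False"
        show "y \<in> Q \<union> N"
        proof (cases "y \<in> N")
          case False
          have "arrow c y \<in> C" using y unfolding Pc_def P_def by (auto simp: arr)
          hence "tgt T1 y \<in> C \<and> tgt T2 y \<in> C" using R1 False by auto
          hence "y \<in> Qs (y \<e>)" unfolding Qs_def tgt_def by auto
          thus ?thesis unfolding Q_def by (cases "y \<e>") auto
        qed simp
      qed
    qed
    finally show ?thesis .
  qed
  have QleC: "\<mu> Q \<le> 2 * \<mu> C" using muQ muJ[of T1 True] muJ[of T1 False] muJC[of T1 True] muJC[of T1 False] by linarith
  define Ou where "Ou a s = I a s - C - N" for a s
  have OuB: "Ou a s \<in> B" for a s unfolding Ou_def by (intro B_Diff IB CB NB)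
  have muO: "\<mu> (I a s - C) \<le> \<mu> (Ou a s)" for a s
    by (rule null_le[OF B_Diff[OF IB CB] NB muN _ OuB]) (auto simp: Ou_def)
  have E0B: "E0 \<in> B" by (rule sets_X[OF E0_sets])
  have muE0: "\<mu> E0 = 1/16" using mu_X[OF E0_sets] E0_meas by simp
  have E0I: "E0 \<inter> I a s = {}" for a s
  proof -
    { fix z assume z: "z \<in> E0" "z \<in> I a s"
      have "z (gen_pow a (\<not> s)) = s" by (rule Icoord[OF z(2)])
      moreover have "z (gen_pow a (\<not> s)) = (\<not> s)" using z(1) unfolding E0_def by simp
      ultimately have False by simp }
    thus ?thesis by blast
  qed
  have sumO: "\<mu> (Ou T1 True) + \<mu> (Ou T1 False) + \<mu> (Ou T2 True) + \<mu> (Ou T2 False) \<le> 1 - \<mu> C - 1/16"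
  proof -
    have "\<mu> (Ou T1 True) + \<mu> (Ou T1 False) + \<mu> (Ou T2 True) + \<mu> (Ou T2 False)
        = \<mu> (Ou T1 True \<union> Ou T1 False \<union> Ou T2 True \<union> Ou T2 False)"
    proof (rule add4[of Ou, symmetric])
      show "Ou a s \<in> B" for a s by (rule OuB)
      show "Ou a s \<inter> Ou a' s' = {}" if "(a, s) \<noteq> (a', s')" for a s a' s'
        using ptrC[of _ a s a' s'] that unfolding Ou_def by blast
    qed
    also have "\<dots> \<le> \<mu> (UNIV - (C \<union> E0))"
      using E0I by (intro mono B_Un OuB B_Diff B_UNIV CB E0B) (auto simp: Ou_def)
    also have "\<dots> = 1 - \<mu> (C \<union> E0)" by (intro compl B_Un CB E0B)
    also have "\<mu> (C \<union> E0) = \<mu> C + \<mu> E0 - \<mu> (C \<inter> E0)" using modular[OF CB E0B] by simp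
    also have "\<mu> (C \<inter> E0) \<le> 0"
    proof -
      have "C \<inter> E0 \<subseteq> {} \<union> N"
      proof
        fix z assume z: "z \<in> C \<inter> E0"
        show "z \<in> {} \<union> N"
        proof (rule ccontr)
          assume "z \<notin> {} \<union> N"
          then obtain i j where "z \<in> I (fst i) (snd i)" using twoI z by blast
          thus False using E0I z by blast
        qed
      qed
      thus ?thesis using null_le[OF B_Int[OF CB E0B] NB muN _ empty_B] empty_mu by simp
    qed
    finally show ?thesis using muE0 by simp
  qed
  have low: "\<mu> C \<ge> 1/16"
  proof -
    have "1 = \<mu> (I T1 True) + \<mu> (I T1 False) + \<mu> (I T2 True) + \<mu> (I T2 False)"
      using sumP muI by simp
    also have "\<dots> = (\<mu> (Pc T1 True) + \<mu> (Pc T1 False) + \<mu> (Pc T2 True) + \<mu> (Pc T2 False))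
       + (\<mu> (I T1 True - C) + \<mu> (I T1 False - C) + \<mu> (I T2 True - C) + \<mu> (I T2 False - C))"
      using splitI muIC by simp
    finally have "1 \<le> \<mu> Q + (\<mu> (Ou T1 True) + \<mu> (Ou T1 False) + \<mu> (Ou T2 True) + \<mu> (Ou T2 False))"
      using sumPc muO[of T1 True] muO[of T1 False] muO[of T2 True] muO[of T2 False] by linarith
    thus ?thesis using sumO QleC by linarith
  qed
  have cnt: "2 * \<mu> C \<le> \<mu> Q"
  proof -
    have "2 * \<mu> (C - N) \<le> \<mu> (I T1 True \<inter> C) + \<mu> (I T1 False \<inter> C) + \<mu> (I T2 True \<inter> C) + \<mu> (I T2 False \<inter> C)"
      using four_count[of "\<lambda>i. I (fst i) (snd i) \<inter> C" "C - N", OF B_Int[OF IB CB] B_Diff[OF CB NB]] twoI by force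
    moreover have "\<mu> C \<le> \<mu> (C - N)" by (rule null_le[OF CB NB muN _ B_Diff[OF CB NB]]) auto
    ultimately show ?thesis using muIC sumPc by simp
  qed
  have Jfull: "\<mu> (C - J a s) \<le> 0" for a s
  proof -
    have "\<mu> Q = \<mu> (J a True) + \<mu> (J a False)" using muQ muJ by simp
    hence "\<mu> (J a s) \<ge> \<mu> C" using cnt muJC[of a True] muJC[of a False] by (cases s) auto
    thus ?thesis using diff[OF JB CB JC] by simp
  qed
  define D where "D = (C - J T1 True) \<union> (C - J T1 False) \<union> (C - J T2 True) \<union> (C - J T2 False)"
  have DB: "D \<in> B" unfolding D_def by (intro B_Un B_Diff CB JB)
  have muD: "\<mu> D \<le> 0"
  proof -
    have b: "C - J a s \<in> B" for a s by (intro B_Diff CB JB)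
    have "\<mu> D \<le> \<mu> ((C - J T1 True) \<union> (C - J T1 False) \<union> (C - J T2 True)) + \<mu> (C - J T2 False)"
      unfolding D_def by (intro sub B_Un b)
    also have "\<dots> \<le> \<mu> ((C - J T1 True) \<union> (C - J T1 False)) + \<mu> (C - J T2 True) + \<mu> (C - J T2 False)"
      using sub[OF B_Un[OF b b] b] by simp
    also have "\<dots> \<le> \<mu> (C - J T1 True) + \<mu> (C - J T1 False) + \<mu> (C - J T2 True) + \<mu> (C - J T2 False)"
      using sub[OF b b] by simp
    finally show ?thesis using Jfull[of T1 True] Jfull[of T1 False] Jfull[of T2 True] Jfull[of T2 False] by linarith
  qed
  define W where "W = shift (gen_pow T1 False) -` (shift (gen_pow T2 True) -` D)"
  have WB: "W \<in> B" unfolding W_def by (intro shift_B DB)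
  have muW: "\<mu> W = \<mu> D" unfolding W_def by (simp add: shift_mu shift_B DB)
  have CE4: "z \<in> E4" if zC: "z \<in> C" and zD: "z \<notin> D" for z
  proof -
    have J: "z \<in> J a s" for a s
    proof (rule ccontr)
      assume "z \<notin> J a s"
      hence "z \<in> D" using zC unfolding D_def by (cases a; cases s) simp_all
      thus False using zD by simp
    qed
    have co: "z (gen_pow a (\<not> s)) = s" for a s using J[of a s] unfolding J_def Qs_def by simp
    show ?thesis unfolding E4_def
    proof (intro CollectI allI)
      fix a b show "z (gen_pow a b) = (\<not> b)" using co[of a "\<not> b"] by simp
    qed
  qed
  have E7B: "E7 \<in> B" by (rule sets_X[OF E7_sets])
  have muE7: "\<mu> E7 = 1/128" using mu_X[OF E7_sets] E7_meas by simp
  have Csub: "C \<subseteq> E7 \<union> D \<union> W"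
  proof
    fix z assume z: "z \<in> C"
    show "z \<in> E7 \<union> D \<union> W"
    proof (cases "z \<in> D \<or> z \<in> W")
      case True thus ?thesis by blast
    next
      case False
      hence zD: "z \<notin> D" and zW: "z \<notin> W" by auto
      have "z \<in> J T1 True" using z zD unfolding D_def by blast
      hence v: "shift (gen_pow T2 True) (shift (gen_pow T1 False) z) \<in> C" unfolding J_def Qs_def by simp
      have vD: "shift (gen_pow T2 True) (shift (gen_pow T1 False) z) \<notin> D" using zW unfolding W_def by simp
      have "z \<in> E4" by (rule CE4[OF z zD])
      moreover have "shift (gen_pow T2 True) (shift (gen_pow T1 False) z) \<in> E4"
        by (rule CE4[OF v vD])
      ultimately show ?thesis unfolding E7_def by blast
    qed
  qed
  have "\<mu> C \<le> \<mu> (E7 \<union> D \<union> W)" using Csub by (intro mono B_Un CB E7B DB WB)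
  also have "\<dots> \<le> \<mu> (E7 \<union> D) + \<mu> W" by (intro sub B_Un E7B DB WB)
  also have "\<dots> \<le> \<mu> E7 + \<mu> D + \<mu> W" using sub[OF E7B DB] by simp
  finally have "\<mu> C \<le> 1/128" using muE7 muD muW by simp
  thus False using low by simp
qed

end

lemma f2_cancel_left: "f2_mult h u = f2_mult h v \<longleftrightarrow> u = v"
  by (metis f2_assoc f2_inv_left f2_one_left)

lemma reduced_replicate: "reduced (replicate n (T1, True))"
  by (induct n) (auto simp: inv_letter_def, case_tac n, auto simp: inv_letter_def)

lemma f2_infinite: "infinite (UNIV :: f2 set)"
proof -
  have "inj (\<lambda>n. abs_f2 (replicate n (T1, True)))"
    by (rule injI) (simp add: abs_f2_inject reduced_replicate)
  thus ?thesis using range_inj_infinite by (metis infinite_iff_countable_subset top_greatest)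
qed

lemma f2_countable: "countable (UNIV :: f2 set)"
proof -
  have g: "(UNIV :: gen set) = {T1, T2}" using gen.exhaust by auto
  have cg: "countable (UNIV :: gen set)" by (rule countable_finite) (simp add: g)
  have cb: "countable (UNIV :: bool set)" by simp
  have "countable ((UNIV :: gen set) \<times> (UNIV :: bool set))" using cg cb by (rule countable_SIGMA)
  hence "countable (UNIV :: letter set)" by simp
  hence "countable (lists (UNIV :: letter set))" by (rule countable_lists)
  hence "countable (abs_f2 ` lists (UNIV :: letter set))" by (rule countable_image)
  moreover have "UNIV = abs_f2 ` lists (UNIV :: letter set)"
    by (metis UNIV_I lists_UNIV rep_f2_inverse subsetI subset_antisym image_iff)
  ultimately show ?thesis by (simp only:)
qed

lemma exists_H:
  assumes uv: "u \<noteq> v"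
  shows "\<exists>H. finite H \<and> card H = n \<and> (\<forall>h\<in>H. \<forall>h'\<in>H. f2_mult h u \<noteq> f2_mult h' v)"
proof (induct n)
  case 0 show ?case by (intro exI[of _ "{}"]) simp
next
  case (Suc n)
  then obtain H where H: "finite H" "card H = n" "\<forall>h\<in>H. \<forall>h'\<in>H. f2_mult h u \<noteq> f2_mult h' v" by blast
  let ?F = "H \<union> (\<lambda>h. f2_mult h u) -` ((\<lambda>h. f2_mult h v) ` H) \<union> (\<lambda>h. f2_mult h v) -` ((\<lambda>h. f2_mult h u) ` H)"
  have injR: "inj (\<lambda>h. f2_mult h w)" for w by (rule injI) (simp add: f2_cancel_right)
  have fin: "finite ?F" using H(1) by (intro finite_UnI finite_vimageI injR finite_imageI)
  from ex_new_if_finite[OF f2_infinite fin] obtain h where h: "h \<notin> ?F" ..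
  have hH: "h \<notin> H" using h by blast
  have hu: "f2_mult h u \<notin> (\<lambda>h. f2_mult h v) ` H" using h by blast
  have hv: "f2_mult h v \<notin> (\<lambda>h. f2_mult h u) ` H" using h by blast
  show ?case
  proof (intro exI[of _ "insert h H"] conjI)
    show "finite (insert h H)" using H by simp
    show "card (insert h H) = Suc n" using H(1) H(2) hH by simp
    show "\<forall>a\<in>insert h H. \<forall>b\<in>insert h H. f2_mult a u \<noteq> f2_mult b v"
    proof (intro ballI)
      fix a b assume a: "a \<in> insert h H" and b: "b \<in> insert h H"
      have h1: "f2_mult h u \<noteq> f2_mult h v" using uv by (simp add: f2_cancel_left)
      have h2: "f2_mult h u \<noteq> f2_mult b' v" if "b' \<in> H" for b' using hu that by (metis image_eqI)
      have h3: "f2_mult a' u \<noteq> f2_mult h v" if "a' \<in> H" for a' using hv that by (metis image_eqI)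
      have "a = h \<or> a \<in> H" "b = h \<or> b \<in> H" using a b by auto
      thus "f2_mult a u \<noteq> f2_mult b v"
        using H(3) h1 h2 h3 by blast
    qed
  qed
qed

definition Fix :: "f2 \<Rightarrow> f2 \<Rightarrow> point set" where
  "Fix u v = {x. \<forall>k. x (f2_mult k u) = x (f2_mult k v)}"

lemma eq_sets: "{x. x a = x b} \<in> sets Xmeasure"
proof -
  have "{x. x a = x b} = ({x. x a = True} \<inter> {x. x b = True}) \<union> ({x. x a = False} \<inter> {x. x b = False})"
    by auto
  thus ?thesis by (simp only:) (intro sets.Un sets.Int coord_sets)
qed

lemma Fix_sets: "Fix u v \<in> sets Xmeasure"
proof -
  have "Fix u v = (\<Inter>k\<in>UNIV. {x. x (f2_mult k u) = x (f2_mult k v)})" unfolding Fix_def by auto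
  also have "\<dots> \<in> sets Xmeasure"
    by (rule sets.countable_INT'') (simp_all only: f2_countable eq_sets, metis sets.top space_X)
  finally show ?thesis .
qed

lemma prob_X: "prob_space Xmeasure"
  unfolding Xmeasure_def by (rule prob_space_PiM) (simp add: prob_space_measure_pmf)

interpretation XP: prob_space Xmeasure by (rule prob_X)

lemma Fix_measure_le:
  assumes uv: "u \<noteq> v"
  shows "measure Xmeasure (Fix u v) \<le> (1/2) ^ n"
proof -
  obtain H where H: "finite H" "card H = n" "\<forall>h\<in>H. \<forall>h'\<in>H. f2_mult h u \<noteq> f2_mult h' v"
    using exists_H[OF uv] by blast
  define fa where "fa h = f2_mult h u" for h
  define fb where "fb h = f2_mult h v" for h
  have injA: "inj fa" unfolding fa_def by (rule injI) (simp add: f2_cancel_right)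
  have injB: "inj fb" unfolding fb_def by (rule injI) (simp add: f2_cancel_right)
  have dis: "fa h \<noteq> fb h'" if "h \<in> H" "h' \<in> H" for h h' using H(3) that unfolding fa_def fb_def by blast
  define J where "J = fa ` H \<union> fb ` H"
  define A where "A T = {x. \<forall>j\<in>J. x j = (j \<in> fa ` T \<union> fb ` T)}" for T
  have finJ: "finite J" unfolding J_def using H(1) by simp
  have cardJ: "card J = 2 * n"
  proof -
    have "fa ` H \<inter> fb ` H = {}" using dis by blast
    hence "card J = card (fa ` H) + card (fb ` H)" unfolding J_def using H(1)
      by (intro card_Un_disjoint) auto
    also have "\<dots> = 2 * n" using H(2) card_image[OF inj_on_subset[OF injA]] card_image[OF inj_on_subset[OF injB]] by simp
    finally show ?thesis .
  qed
  have sub: "Fix u v \<subseteq> (\<Union>T\<in>Pow H. A T)"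
  proof
    fix x assume x: "x \<in> Fix u v"
    hence xf: "x (fa k) = x (fb k)" for k unfolding Fix_def fa_def fb_def by blast
    define T where "T = {h \<in> H. x (fa h)}"
    have "x \<in> A T" unfolding A_def
    proof (intro CollectI ballI)
      fix j assume j: "j \<in> J"
      show "x j = (j \<in> fa ` T \<union> fb ` T)"
      proof (cases "j \<in> fa ` H")
        case True
        then obtain h where h: "h \<in> H" "j = fa h" by blast
        have nb: "j \<notin> fb ` T"
        proof
          assume "j \<in> fb ` T"
          then obtain h' where "h' \<in> T" "j = fb h'" by blast
          thus False using dis[OF h(1), of h'] h(2) unfolding T_def by simp
        qed
        have "j \<in> fa ` T \<longleftrightarrow> h \<in> T" unfolding h(2) by (rule inj_image_mem_iff[OF injA])
        thus ?thesis using nb h unfolding T_def by simp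
      next
        case False
        then obtain h where h: "h \<in> H" "j = fb h" using j unfolding J_def by blast
        have na: "j \<notin> fa ` T"
        proof
          assume "j \<in> fa ` T"
          then obtain h' where "h' \<in> T" "j = fa h'" by blast
          thus False using dis[of h' h] h unfolding T_def by simp
        qed
        have "j \<in> fb ` T \<longleftrightarrow> h \<in> T" unfolding h(2) by (rule inj_image_mem_iff[OF injB])
        thus ?thesis using na h xf[of h] unfolding T_def by simp
      qed
    qed
    moreover have "T \<in> Pow H" unfolding T_def by auto
    ultimately show "x \<in> (\<Union>T\<in>Pow H. A T)" by blast
  qed
  have Asets: "A T \<in> sets Xmeasure" for T unfolding A_def by (rule cyl_sets[OF finJ])
  have "measure Xmeasure (Fix u v) \<le> measure Xmeasure (\<Union>T\<in>Pow H. A T)"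
    using sub Asets H(1) by (intro XP.finite_measure_mono) auto
  also have "\<dots> \<le> (\<Sum>T\<in>Pow H. measure Xmeasure (A T))"
    using Asets H(1) by (intro XP.finite_measure_subadditive_finite) auto
  also have "\<dots> = (\<Sum>T\<in>Pow H. (1/2) ^ (2 * n))"
    by (intro sum.cong refl) (simp only: A_def cyl_measure[OF finJ] cardJ)
  also have "\<dots> = 2 ^ n * (1/2) ^ (2 * n)" using H(1) H(2) by (simp add: card_Pow)
  also have "\<dots> = (1/2::real) ^ n" by (simp add: power_mult power2_eq_square power_one_over field_simps)
  finally show ?thesis .
qed

lemma Fix_null:
  assumes uv: "u \<noteq> v"
  shows "Fix u v \<in> null_sets Xmeasure"
proof -
  have "measure Xmeasure (Fix u v) \<le> 0"
  proof (rule ccontr)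
    assume "\<not> ?thesis"
    hence pos: "measure Xmeasure (Fix u v) > 0" by simp
    obtain n where "(1/2::real) ^ n < measure Xmeasure (Fix u v)"
      using real_arch_pow_inv[OF pos] by fastforce
    thus False using Fix_measure_le[OF uv, of n] by simp
  qed
  hence "measure Xmeasure (Fix u v) = 0" using measure_nonneg[of Xmeasure] by (meson order_antisym)
  hence "emeasure Xmeasure (Fix u v) = 0" by (simp add: XP.emeasure_eq_measure)
  thus ?thesis using Fix_sets by (simp add: null_sets_def)
qed

definition orb :: "point \<Rightarrow> point set" where "orb x = range (\<lambda>g. shift g x)"
definition rep :: "point \<Rightarrow> point" where "rep x = (SOME y. y \<in> orb x)"
definition pos :: "point \<Rightarrow> f2" where "pos x = (SOME g. x = shift g (rep x))"
definition Good :: "point \<Rightarrow> bool" where "Good x \<longleftrightarrow> (\<forall>u v. shift u x = shift v x \<longrightarrow> u = v)"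
definition sel :: "point \<Rightarrow> gen" where
  "sel x = (case rep_f2 (pos x) of [] \<Rightarrow> T1 | l # _ \<Rightarrow> if l = (T1, \<not> x \<e>) then T2 else T1)"
definition col :: colouring where "col x = (sel x, PU)"

lemma orb_self: "x \<in> orb x"
  unfolding orb_def by (metis rangeI shift_one)

lemma orb_shift: "shift g x \<in> orb x"
  unfolding orb_def by simp

lemma orb_sym:
  assumes "y \<in> orb x" shows "orb y = orb x"
proof -
  obtain g where g: "y = shift g x" using assms unfolding orb_def by blast
  have "orb y \<subseteq> orb x" unfolding orb_def g by (auto simp: shift_shift)
  moreover have "orb x \<subseteq> orb y"
  proof
    fix z assume "z \<in> orb x"
    then obtain h where h: "z = shift h x" unfolding orb_def by blast
    have "z = shift (f2_mult h (f2_inv g)) y" unfolding h g shift_shift f2_assoc by simp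
    thus "z \<in> orb y" unfolding orb_def by blast
  qed
  ultimately show ?thesis by blast
qed

lemma rep_in: "rep x \<in> orb x"
  unfolding rep_def by (rule someI[of _ x]) (rule orb_self)

lemma rep_eq: "y \<in> orb x \<Longrightarrow> rep y = rep x"
  unfolding rep_def using orb_sym by simp

lemma pos_eq: "x = shift (pos x) (rep x)"
proof -
  have "x \<in> orb (rep x)" using orb_sym[OF rep_in] orb_self by simp
  then obtain g where "x = shift g (rep x)" unfolding orb_def by blast
  thus ?thesis unfolding pos_def by (rule someI)
qed

lemma Good_orb: assumes "Good x" "y \<in> orb x" shows "Good y"
proof -
  obtain g where g: "y = shift g x" using assms(2) unfolding orb_def by blast
  show ?thesis unfolding Good_def
  proof (intro allI impI)
    fix u v assume "shift u y = shift v y"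
    hence "shift (f2_mult u g) x = shift (f2_mult v g) x" unfolding g shift_shift .
    hence "f2_mult u g = f2_mult v g" using assms(1) unfolding Good_def by blast
    thus "u = v" by (simp add: f2_cancel_right)
  qed
qed

lemma rep_mult_gen:
  assumes "case rep_f2 g of [] \<Rightarrow> True | m # _ \<Rightarrow> m \<noteq> inv_letter l"
  shows "rep_f2 (f2_mult (abs_f2 [l]) g) = l # rep_f2 g"
proof -
  have cr: "cons_red l (rep_f2 g) = l # rep_f2 g"
    using assms by (cases "rep_f2 g") (auto simp: cons_red_def)
  have "reduced (l # rep_f2 g)"
    using assms rep_red[of g] by (cases "rep_f2 g") auto
  thus ?thesis unfolding f2_mult_def word_mult_def
    by (simp add: abs_f2_inverse cr)
qed

lemma sel_ok: "case rep_f2 (pos y) of [] \<Rightarrow> True | m # _ \<Rightarrow> m \<noteq> inv_letter (sel y, y \<e>)"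
  unfolding sel_def by (cases "rep_f2 (pos y)") (auto simp: inv_letter_def)

lemma arrow_col: "arrow col y = shift (f2_mult (gen_pow (sel y) (y \<e>)) (pos y)) (rep y)"
proof -
  have "arrow col y = shift (gen_pow (sel y) (y \<e>)) y" by (simp add: arrow_def tgt_def col_def)
  also have "\<dots> = shift (gen_pow (sel y) (y \<e>)) (shift (pos y) (rep y))" using pos_eq[of y] by simp
  finally show ?thesis by (simp add: shift_shift)
qed

lemma arrow_col_orb: "y \<in> orb (arrow col y)"
proof -
  have "shift (gen_pow (sel y) (\<not> (y \<e>))) (arrow col y) = y"
    by (simp add: arrow_def tgt_def col_def)
  thus ?thesis using orb_shift by metis
qed

lemma col_inj:
  assumes G: "Good x" and y: "arrow col y = x" and z: "arrow col z = x"
  shows "y = z"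
proof -
  have yo: "y \<in> orb x" using arrow_col_orb[of y] y by simp
  have zo: "z \<in> orb x" using arrow_col_orb[of z] z by simp
  have ry: "rep y = rep x" by (rule rep_eq[OF yo])
  have rz: "rep z = rep x" by (rule rep_eq[OF zo])
  have Gr: "Good (rep x)" by (rule Good_orb[OF G rep_in])
  have "shift (f2_mult (gen_pow (sel y) (y \<e>)) (pos y)) (rep x) = shift (f2_mult (gen_pow (sel z) (z \<e>)) (pos z)) (rep x)"
    using arrow_col[of y] arrow_col[of z] y z ry rz by simp
  hence "f2_mult (gen_pow (sel y) (y \<e>)) (pos y) = f2_mult (gen_pow (sel z) (z \<e>)) (pos z)"
    using Gr unfolding Good_def by blast
  hence "rep_f2 (f2_mult (gen_pow (sel y) (y \<e>)) (pos y)) = rep_f2 (f2_mult (gen_pow (sel z) (z \<e>)) (pos z))"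
    by simp
  hence "rep_f2 (pos y) = rep_f2 (pos z)"
    unfolding gen_pow_def using rep_mult_gen[OF sel_ok[of y]] rep_mult_gen[OF sel_ok[of z]] by simp
  hence "pos y = pos z" by (simp add: rep_f2_inject)
  thus ?thesis using pos_eq[of y] pos_eq[of z] ry rz by metis
qed

lemma col_rule: assumes G: "Good x" shows "colouring_rule col x"
proof -
  have h1: "\<And>z. snd (col z) = PU" by (simp add: col_def)
  have h2: "\<not> (\<exists>y z. y \<noteq> z \<and> arrow col y = x \<and> arrow col z = x)" using col_inj[OF G] by blast
  show ?thesis unfolding colouring_rule_def using h1 h2 by simp
qed

lemma not_Good_sub: "{x. \<not> Good x} \<subseteq> (\<Union>p\<in>{p. fst p \<noteq> snd p}. Fix (fst p) (snd p))"
proof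
  fix x assume "x \<in> {x. \<not> Good x}"
  then obtain u v where uv: "shift u x = shift v x" "u \<noteq> v" unfolding Good_def by blast
  have "x \<in> Fix u v" unfolding Fix_def
  proof (intro CollectI allI)
    fix k show "x (f2_mult k u) = x (f2_mult k v)" using fun_cong[OF uv(1), of k] by (simp add: shift_def)
  qed
  moreover have "(u, v) \<in> {p. fst p \<noteq> snd p}" using uv(2) by simp
  ultimately show "x \<in> (\<Union>p\<in>{p. fst p \<noteq> snd p}. Fix (fst p) (snd p))" by (intro UN_I[of "(u,v)"]) auto
qed

lemma part_a: "satisfies colouring_rule col"
proof -
  have cnt: "countable {p :: f2 \<times> f2. fst p \<noteq> snd p}"
  proof -
    have "countable (UNIV :: (f2 \<times> f2) set)" using countable_SIGMA[OF f2_countable f2_countable] by simp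
    thus ?thesis by (rule countable_subset[OF subset_UNIV])
  qed
  have "(\<Union>p\<in>{p. fst p \<noteq> snd p}. Fix (fst p) (snd p)) \<in> null_sets Xmeasure"
    by (rule null_sets_UN'[OF cnt]) (simp add: Fix_null)
  moreover have "{x \<in> space Xmeasure. \<not> colouring_rule col x} \<subseteq> (\<Union>p\<in>{p. fst p \<noteq> snd p}. Fix (fst p) (snd p))"
    using not_Good_sub col_rule by blast
  ultimately show ?thesis unfolding satisfies_def by (rule AE_I')
qed

theorem proposition3:
  shows "paradoxical colouring_rule"
  unfolding paradoxical_def
proof
  show "\<exists>c. satisfies colouring_rule c" using part_a by blast
  show "\<not> (\<exists>B \<mu> c. invariant_extension B \<mu> \<and> satisfies colouring_rule c
            \<and> (\<forall>k. {x \<in> space Xmeasure. c x = k} \<in> B))"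
  proof
    assume "\<exists>B \<mu> c. invariant_extension B \<mu> \<and> satisfies colouring_rule c
            \<and> (\<forall>k. {x \<in> space Xmeasure. c x = k} \<in> B)"
    then obtain B \<mu> c where h: "invariant_extension B \<mu>" "satisfies colouring_rule c"
      "\<forall>k. {x \<in> space Xmeasure. c x = k} \<in> B" by blast
    show False using ie.main_b[OF ie.intro[OF h(1)] h(2) h(3)] .
  qed
qed

end
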